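(* Fix integers $0\le d\le m$ and $\delta\in(0,1)$, $\chi>0$. There is $\varepsilon_0>0$ such that for all $0<\varepsilon<\varepsilon_0$ the following holds. Let $r>0$ with $2r^\delta<\varepsilon$, let $0<\eta\le p\le r/2$, let $F=D+H:B^m[r]\to\mathbb R^m$ satisfy (GT2)–(GT3), and let $G:B^d[p]\to\mathbb R^{m-d}$ be the representing function of an admissible graph in $\mathscr M^u_{p,\eta}$. Write $H=(h_1,h_2)$. Then $\Psi:B^d[p]\to\mathbb R^d$, $\Psi(v)=D_1v+h_1(v,G(v))$, is injective, $\Psi(B^d[p])\supset B^d[e^{\chi-\sqrt\varepsilon}p]$, and its inverse $\Phi:\Psi(B^d[p])\to B^d[p]$ satisfies: (1) $\|d\Phi\|_{C^0}<e^{-\chi+\varepsilon}$; (2) $\|\Phi(0)\|<2\varepsilon\eta e^{-\chi+\varepsilon}$; (3) $\|d\Phi\|_{C^\delta}<e^{-\chi+3\varepsilon}$.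
   Context: $\|\cdot\|$ is the Euclidean norm and operator norm; $B^n[r]$ is the ball of radius $r$ centred at $0$ in $\mathbb R^n$. For $h$ on a bounded open $U$: $\|h\|_{C^0}=\sup_U\|h\|$, ${\rm Hol}_\delta(h)=\sup_{x\ne y}\|h(x)-h(y)\|/\|x-y\|^\delta$, $\|h\|_{C^\delta}=\|h\|_{C^0}+{\rm Hol}_\delta(h)$, $\|h\|_{C^1}=\|h\|_{C^0}+\|dh\|_{C^0}$. An admissible ($u$-)graph in $\mathscr M^u_{p,\eta}$ is $\{(v,G(v)):v\in B^d[p]\}$ with $G:B^d[p]\to\mathbb R^{m-d}$ of class $C^{1+\delta}$ satisfying (AM1) $\|G(0)\|\le10^{-3}\eta$, (AM2) $\|dG_0\|\le\frac12\eta^\delta$, (AM3) $\|dG\|_{C^0}+{\rm Hol}_\delta(dG)\le\frac12$ (norms over $B^d[p]$). (GT2): $D={\rm diag}(D_1,D_2)$ with $D_1:\mathbb R^d\to\mathbb R^d$, $D_2:\mathbb R^{m-d}\to\mathbb R^{m-d}$ invertible linear, $\|D_1^{-1}\|<e^{-\chi}$, $\|D_2\|<e^{-\chi}$. (GT3): $H:B^m[r]\to\mathbb R^m$ is $C^{1+\delta}$ with (a) $\|H(0)\|<\varepsilon\eta$, (b) $\|dH\|_{C^0(B^m[t])}<\varepsilon t^\delta$ for every $t\in[\eta,2p]$, (c) ${\rm Hol}_\delta(dH)<\varepsilon$ on $B^m[r]$. No upper bound on $\|D_1\|$ or lower bound on $\|D_2\|$ is assumed. *)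

theory Defs
  imports "HOL-Analysis.Analysis"
begin

text \<open>Sup norm over a set S, valued in the extended nonnegative reals
  (so that unbounded functions get the value infinity).\<close>
definition c0_norm :: "'a set \<Rightarrow> ('a \<Rightarrow> 'c::real_normed_vector) \<Rightarrow> ennreal" where
  "c0_norm S f = (SUP x\<in>S. ennreal (norm (f x)))"

definition hol :: "real \<Rightarrow> 'a::real_normed_vector set \<Rightarrow> ('a \<Rightarrow> 'c::real_normed_vector) \<Rightarrow> ennreal" where
  "hol \<delta> S f = (SUP xy\<in>{(x, y). x \<in> S \<and> y \<in> S \<and> x \<noteq> y}.
      ennreal (norm (f (fst xy) - f (snd xy)) / norm (fst xy - snd xy) powr \<delta>))"

definition cdelta_norm :: "real \<Rightarrow> 'a::real_normed_vector set \<Rightarrow> ('a \<Rightarrow> 'c::real_normed_vector) \<Rightarrow> ennreal" where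
  "cdelta_norm \<delta> S f = c0_norm S f + hol \<delta> S f"

definition C1_holder :: "real \<Rightarrow> 'a::real_normed_vector set \<Rightarrow> ('a \<Rightarrow> 'c::real_normed_vector)
    \<Rightarrow> ('a \<Rightarrow> 'a \<Rightarrow>\<^sub>L 'c) \<Rightarrow> bool" where
  "C1_holder \<delta> S f f' \<longleftrightarrow>
     (\<forall>x\<in>S. (f has_derivative blinfun_apply (f' x)) (at x within S)) \<and>
     c0_norm S f' < \<infinity> \<and> hol \<delta> S f' < \<infinity>"

definition admissible_u :: "real \<Rightarrow> real \<Rightarrow> real \<Rightarrow> ('a::euclidean_space \<Rightarrow> 'b::euclidean_space)
    \<Rightarrow> ('a \<Rightarrow> 'a \<Rightarrow>\<^sub>L 'b) \<Rightarrow> bool" where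
  "admissible_u \<delta> p \<eta> G G' \<longleftrightarrow>
     C1_holder \<delta> (cball 0 p) G G' \<and>
     norm (G 0) \<le> 10 powr (-3) * \<eta> \<and>
     norm (G' 0) \<le> 1/2 * \<eta> powr \<delta> \<and>
     c0_norm (cball 0 p) G' + hol \<delta> (cball 0 p) G' \<le> ennreal (1/2)"

end

theory Submission
  imports Defs
begin


lemma c0_normD_le: "c0_norm S f \<le> ennreal b \<Longrightarrow> x \<in> S \<Longrightarrow> 0 \<le> b \<Longrightarrow> norm (f x) \<le> b"
  unfolding c0_norm_def
  by (metis (no_types, lifting) SUP_le_iff ennreal_le_iff)

lemma c0_normD: "c0_norm S f < ennreal b \<Longrightarrow> x \<in> S \<Longrightarrow> norm (f x) < b"
  unfolding c0_norm_def
  by (metis SUP_upper ennreal_less_iff le_less_trans norm_ge_zero ennreal_le_iff order.strict_iff_not)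

lemma hol_le_D: assumes "hol \<delta> S f \<le> ennreal b" "x \<in> S" "y \<in> S" "0 \<le> b"
  shows "norm (f x - f y) \<le> b * norm (x - y) powr \<delta>"
proof (cases "x = y")
  case True then show ?thesis using assms by simp
next
  case False
  have "ennreal (norm (f x - f y) / norm (x - y) powr \<delta>) \<le> hol \<delta> S f"
    unfolding hol_def using assms False by (intro SUP_upper2[of "(x,y)"]) auto
  also have "\<dots> \<le> ennreal b" by fact
  finally have "norm (f x - f y) / norm (x - y) powr \<delta> \<le> b"
    using assms(4) ennreal_le_iff by blast
  moreover have "norm (x - y) powr \<delta> > 0" using False by simp
  ultimately show ?thesis by (simp add: divide_le_eq mult.commute)
qed

lemma hol_less_D: assumes "hol \<delta> S f < ennreal b" "x \<in> S" "y \<in> S"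
  shows "norm (f x - f y) \<le> b * norm (x - y) powr \<delta>"
  using hol_le_D[of \<delta> S f b x y] assms
  by (metis ennreal_less_zero_iff hol_le_D less_imp_le not_le_imp_less le_less_trans ennreal_le_iff zero_le)

lemma c0_norm_le_I: "(\<And>x. x \<in> S \<Longrightarrow> norm (f x) \<le> b) \<Longrightarrow> c0_norm S f \<le> ennreal b"
  unfolding c0_norm_def by (intro SUP_least) (simp add: ennreal_leI)

lemma hol_le_I: assumes "\<And>x y. x \<in> S \<Longrightarrow> y \<in> S \<Longrightarrow> x \<noteq> y \<Longrightarrow> norm (f x - f y) \<le> b * norm (x - y) powr \<delta>"
  shows "hol \<delta> S f \<le> ennreal b"
  unfolding hol_def
proof (intro SUP_least, clarsimp)
  fix x y assume "x \<in> S" "y \<in> S" "x \<noteq> y"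
  then have "norm (f x - f y) / norm (x - y) powr \<delta> \<le> b"
    using assms[of x y] by (simp add: divide_le_eq mult.commute)
  then show "ennreal (norm (f x - f y) / norm (x - y) powr \<delta>) \<le> ennreal b"
    by (rule ennreal_leI)
qed



lemma inv_deriv_within:
  fixes f :: "'a::real_normed_vector \<Rightarrow> 'b::real_normed_vector"
  assumes df: "(f has_derivative A) (at x within K)" and xK: "x \<in> K"
    and B: "bounded_linear B" and BA: "\<And>u. B (A u) = u"
    and gf: "\<And>v. v \<in> K \<Longrightarrow> g (f v) = v"
    and M: "0 < M" and lip: "\<And>v w. v \<in> K \<Longrightarrow> w \<in> K \<Longrightarrow> norm (v - w) \<le> M * norm (f v - f w)"
  shows "(g has_derivative B) (at (f x) within f ` K)"
  unfolding has_derivative_within_alt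
proof (intro conjI allI impI B)
  fix e :: real assume e: "e > 0"
  obtain NB where NB: "NB > 0" "\<And>z. norm (B z) \<le> norm z * NB"
    using bounded_linear.pos_bounded[OF B] by blast
  define e' where "e' = e / (NB * M)"
  have e': "e' > 0" using e NB M by (simp add: e'_def)
  have lA: "linear A" using df has_derivative_linear by blast
  obtain d where d: "d > 0" "\<And>y. y \<in> K \<Longrightarrow> norm (y - x) < d \<Longrightarrow> norm (f y - f x - A (y - x)) \<le> e' * norm (y - x)"
    using df e' unfolding has_derivative_within_alt by meson
  show "\<exists>d>0. \<forall>y\<in>f ` K. norm (y - f x) < d \<longrightarrow> norm (g y - g (f x) - B (y - f x)) \<le> e * norm (y - f x)"
  proof (intro exI[of _ "d / M"] conjI ballI impI)
    show "d / M > 0" using d M by simp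
    fix y assume yK: "y \<in> f ` K" and yd: "norm (y - f x) < d / M"
    then obtain v where v: "v \<in> K" "y = f v" by auto
    have gv: "g y = v" "g (f x) = x" using gf v xK by auto
    have vx: "norm (v - x) \<le> M * norm (y - f x)" using lip[OF v(1) xK] v by simp
    hence "norm (v - x) < d" using yd M by (simp add: less_divide_eq mult.commute)
    hence 1: "norm (f v - f x - A (v - x)) \<le> e' * norm (v - x)" using d v by blast
    have "g y - g (f x) - B (y - f x) = - B (f v - f x - A (v - x))"
      using gv v BA linear_diff[OF bounded_linear.linear[OF B]] linear_diff[OF lA]
      by (simp add: linear_diff[OF bounded_linear.linear[OF B]] BA)
    hence "norm (g y - g (f x) - B (y - f x)) = norm (B (f v - f x - A (v - x)))" by simp
    also have "\<dots> \<le> norm (f v - f x - A (v - x)) * NB" by (rule NB)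
    also have "\<dots> \<le> e' * norm (v - x) * NB" using 1 NB by (simp add: mult_right_mono)
    also have "\<dots> \<le> e' * (M * norm (y - f x)) * NB" using vx e' NB by (simp add: mult_left_mono mult_right_mono)
    also have "\<dots> = e * norm (y - f x)" using NB M by (simp add: e'_def field_simps)
    finally show "norm (g y - g (f x) - B (y - f x)) \<le> e * norm (y - f x)" .
  qed
qed


lemma num_aux: fixes a e :: real assumes "0 < e" "e < 1/100" "1 + e \<le> a"
  shows "e * e \<le> e * (1/100)" "e * e * e \<le> e * e * (1/100)" "e * (1 + e) \<le> e * a" "a > 0" "a - e^2 > 0"
proof -
  show ee: "e * e \<le> e * (1/100)" using mult_left_mono[of e "1/100" e] assms by linarith
  show "e * e * e \<le> e * e * (1/100)" using mult_left_mono[of e "1/100" "e*e"] assms by simp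
  show "e * (1 + e) \<le> e * a" using mult_left_mono[OF assms(3), of e] assms by linarith
  show "a > 0" using assms by simp
  show "a - e^2 > 0" using ee assms unfolding power2_eq_square by linarith
qed
lemma num1: fixes a e :: real assumes "0 < e" "e < 1/100" "1 + e \<le> a"
  shows "1/(a - e^2) < (1/a) * (1 + e)"
proof -
  note n = num_aux[OF assms]
  have i: "(a - e^2) * (1 + e) = a + e * a - e * e - e * e * e" "e * (1 + e) = e + e * e"
    by (simp_all add: algebra_simps power2_eq_square)
  have "a * 1 < (a - e^2) * (1 + e)"
    using n assms i by linarith
  then show ?thesis using n by (simp add: field_simps)
qed
lemma num2: fixes a e :: real assumes "0 < e" "e < 1/100" "1 + e \<le> a"
  shows "1/(a - e^2) * (1 + 5/2*e) < (1/a) * (1 + 3*e)"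
proof -
  note n = num_aux[OF assms]
  have i: "(a - e^2) * (1 + 3*e) = a + 3 * (e * a) - e * e - 3 * (e * e * e)" "e * (1 + e) = e + e * e"
     "a * (1 + 5/2*e) = a + 5/2 * (e * a)"
    by (simp_all add: algebra_simps power2_eq_square)
  have "a * (1 + 5/2*e) < (a - e^2) * (1 + 3*e)"
    using n assms i by linarith
  then show ?thesis using n by (simp add: field_simps)
qed


lemma core:
  fixes \<delta> \<kappa> \<epsilon> r \<eta> p :: real
    and D1 :: "'a::euclidean_space \<Rightarrow>\<^sub>L 'a"
    and H :: "'a \<times> 'b::euclidean_space \<Rightarrow> 'a \<times> 'b" and H' :: "'a \<times> 'b \<Rightarrow> ('a \<times> 'b) \<Rightarrow>\<^sub>L ('a \<times> 'b)"
    and G :: "'a \<Rightarrow> 'b" and G' :: "'a \<Rightarrow> 'a \<Rightarrow>\<^sub>L 'b"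
  assumes \<delta>: "0 < \<delta>" "\<delta> < 1" and \<kappa>: "0 < \<kappa>"
    and eps: "0 < \<epsilon>" "\<epsilon> < 1/100" "\<epsilon> < \<kappa>"
    and r: "0 < r" "2 * r powr \<delta> < \<epsilon>" "0 < \<eta>" "\<eta> \<le> p" "p \<le> r / 2"
    and D1: "bij (blinfun_apply D1)" "onorm (inv (blinfun_apply D1)) < exp (-\<kappa>)"
    and HC: "C1_holder \<delta> (cball 0 r) H H'" and H0: "norm (H 0) < \<epsilon> * \<eta>"
    and Hc0: "\<forall>t\<in>{\<eta>..2*p}. c0_norm (cball 0 t) H' < ennreal (\<epsilon> * t powr \<delta>)"
    and Hhol: "hol \<delta> (cball 0 r) H' < ennreal \<epsilon>"
    and adm: "admissible_u \<delta> p \<eta> G G'"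
  shows "(let \<Psi> = (\<lambda>v. blinfun_apply D1 v + fst (H (v, G v)));
           \<Phi> = the_inv_into (cball 0 p) \<Psi>
       in inj_on \<Psi> (cball 0 p) \<and>
          cball 0 (exp (\<kappa> - sqrt \<epsilon>) * p) \<subseteq> \<Psi> ` cball 0 p \<and>
          (\<exists>\<Phi>'. (\<forall>y\<in>\<Psi> ` cball 0 p.
                    (\<Phi> has_derivative blinfun_apply (\<Phi>' y)) (at y within \<Psi> ` cball 0 p)) \<and>
                 c0_norm (\<Psi> ` cball 0 p) \<Phi>' < ennreal (exp (-\<kappa> + \<epsilon>)) \<and>
                 norm (\<Phi> 0) < 2 * \<epsilon> * \<eta> * exp (-\<kappa> + \<epsilon>) \<and>
                 cdelta_norm \<delta> (\<Psi> ` cball 0 p) \<Phi>' < ennreal (exp (-\<kappa> + 3 * \<epsilon>))))"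
proof -
  define Di where "Di = inv (blinfun_apply D1)"
  have injD1: "inj (blinfun_apply D1)" using D1 bij_is_inj by blast
  have Di_bl: "bounded_linear Di" unfolding Di_def
    by (rule inj_linear_imp_inv_bounded_linear[OF blinfun.bounded_linear_right injD1])
  have D1Di: "\<And>z. blinfun_apply D1 (Di z) = z" unfolding Di_def using D1(1) by (simp add: bij_is_surj surj_f_inv_f)
  have DiD1: "\<And>u. Di (blinfun_apply D1 u) = u" unfolding Di_def using injD1 by (simp add: inv_f_f)
  have c: "0 \<le> onorm Di" "onorm Di < exp(-\<kappa>)" using onorm_pos_le[OF Di_bl] D1(2) by (auto simp: Di_def)
  have Dibound: "\<And>z. norm (Di z) \<le> exp(-\<kappa>) * norm z"
    by (rule order.trans[OF onorm[OF Di_bl] mult_right_mono]) (use c in auto)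
  have D1low: "exp \<kappa> * norm u \<le> norm (blinfun_apply D1 u)" for u
  proof -
    have "norm u \<le> exp(-\<kappa>) * norm (blinfun_apply D1 u)" using Dibound[of "blinfun_apply D1 u"] DiD1 by simp
    then show ?thesis by (simp add: exp_minus field_simps)
  qed
  have Gd: "\<And>v. v \<in> cball 0 p \<Longrightarrow> (G has_derivative blinfun_apply (G' v)) (at v within cball 0 p)"
    and G0: "norm (G 0) \<le> 10 powr (-3) * \<eta>"
    and Gsum: "c0_norm (cball 0 p) G' + hol \<delta> (cball 0 p) G' \<le> ennreal (1/2)"
    using adm unfolding admissible_u_def C1_holder_def by auto
  have Gc0: "c0_norm (cball 0 p) G' \<le> ennreal (1/2)"
    using order.trans[OF add_increasing2[OF zero_le order_refl] Gsum] .
  have Gh: "hol \<delta> (cball 0 p) G' \<le> ennreal (1/2)"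
    using order.trans[OF add_increasing[OF zero_le order_refl] Gsum] .
  have G'n: "\<And>v. v \<in> cball 0 p \<Longrightarrow> norm (G' v) \<le> 1/2" using c0_normD_le[OF Gc0] by simp
  have G'h: "\<And>v w. v \<in> cball 0 p \<Longrightarrow> w \<in> cball 0 p \<Longrightarrow> norm (G' v - G' w) \<le> 1/2 * norm (v - w) powr \<delta>"
    using hol_le_D[OF Gh] by simp
  have G'on: "\<And>v. v \<in> cball 0 p \<Longrightarrow> onorm (blinfun_apply (G' v)) \<le> 1/2"
    using G'n by (metis norm_blinfun.rep_eq)
  have Glip: "\<And>v w. v \<in> cball 0 p \<Longrightarrow> w \<in> cball 0 p \<Longrightarrow> norm (G v - G w) \<le> 1/2 * norm (v - w)"
    by (rule differentiable_bound[OF convex_cball Gd G'on])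
  have G0': "norm (G 0) \<le> \<eta> / 1000" using G0 by (simp add: powr_minus powr_numeral)
  have Hd: "\<And>x. x \<in> cball 0 r \<Longrightarrow> (H has_derivative blinfun_apply (H' x)) (at x within cball 0 r)"
    using HC unfolding C1_holder_def by auto
  have rd: "r powr \<delta> < \<epsilon> / 2" using r by simp
  have powr2p: "(2*p) powr \<delta> \<le> r powr \<delta>" using r \<delta> by (intro powr_mono2) auto
  have H'small: "norm (H' x) \<le> \<epsilon>^2/2" if x: "x \<in> cball 0 (2*p)" for x
  proof -
    have "norm (H' x) < \<epsilon> * (2*p) powr \<delta>" using c0_normD[OF Hc0[rule_format, of "2*p"] x] r by auto
    also have "\<dots> \<le> \<epsilon> * (\<epsilon>/2)" using powr2p rd eps by (intro mult_left_mono) auto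
    finally show ?thesis by (simp add: power2_eq_square)
  qed
  have etad: "\<eta> powr \<delta> \<le> \<epsilon>/2" using powr_mono2[of \<delta> \<eta> r] r \<delta> rd by auto
  have H'eta: "\<And>x. x \<in> cball 0 \<eta> \<Longrightarrow> norm (H' x) \<le> \<epsilon> * \<eta> powr \<delta>"
    using c0_normD[OF Hc0[rule_format, of \<eta>]] r less_imp_le by auto
  have H'h: "\<And>x y. x \<in> cball 0 r \<Longrightarrow> y \<in> cball 0 r \<Longrightarrow> norm (H' x - H' y) \<le> \<epsilon> * norm (x - y) powr \<delta>"
    using hol_less_D[OF Hhol] by blast
  define g where "g v = (v, G v)" for v
  have gball: "g v \<in> cball 0 (2*p)" if v: "v \<in> cball 0 p" for v
  proof -
    have "0 \<in> cball (0::'a) p" using r by simp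
    from Glip[OF v this] have "norm (G v - G 0) \<le> 1/2 * norm v" by simp
    then have "norm (G v) \<le> norm (G 0) + 1/2 * norm v"
      using norm_triangle_ineq2[of "G v" "G 0"] by linarith
    then have "norm (g v) \<le> norm v + (norm (G 0) + 1/2 * norm v)"
      unfolding g_def using norm_Pair_le[of v "G v"] by linarith
    then show ?thesis using v G0' r by simp
  qed
  have gr: "\<And>v. v \<in> cball 0 p \<Longrightarrow> g v \<in> cball 0 r" using gball r by fastforce
  have glip: "\<And>v w::'a. v \<in> cball 0 p \<Longrightarrow> w \<in> cball 0 p \<Longrightarrow> norm (g v - g w) \<le> 3/2 * norm (v - w)"
  proof -
    fix v w :: 'a assume "v \<in> cball 0 p" "w \<in> cball 0 p"
    then have "norm (G v - G w) \<le> 1/2 * norm (v - w)" by (rule Glip)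
    moreover have "norm (g v - g w) \<le> norm (v - w) + norm (G v - G w)"
      unfolding g_def using norm_Pair_le[of "v - w" "G v - G w"] by simp
    ultimately show "norm (g v - g w) \<le> 3/2 * norm (v - w)" by simp
  qed
  have gd: "\<And>v. v \<in> cball 0 p \<Longrightarrow> (g has_derivative (\<lambda>u. (u, blinfun_apply (G' v) u))) (at v within cball 0 p)"
    unfolding g_def by (intro has_derivative_Pair has_derivative_ident Gd)
  have pairb: "norm (u, blinfun_apply (G' v) u) \<le> 3/2 * norm u" if v: "v \<in> cball 0 p" for u v
  proof -
    have "norm (blinfun_apply (G' v) u) \<le> 1/2 * norm u"
      using norm_blinfun[of "G' v" u] G'n[OF v] by (smt (verit) mult_right_mono norm_ge_zero)
    then show ?thesis using norm_Pair_le[of u "blinfun_apply (G' v) u"] by simp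
  qed
  define hf where "hf v = (\<lambda>u. fst (blinfun_apply (H' (g v)) (u, blinfun_apply (G' v) u)))" for v
  have hf_bl: "bounded_linear (hf v)" for v unfolding hf_def by (auto intro!: bounded_linear_intros)
  define hd where "hd v = Blinfun (hf v)" for v
  have hd_app: "blinfun_apply (hd v) u = fst (blinfun_apply (H' (g v)) (u, blinfun_apply (G' v) u))" for v u
    using bounded_linear_Blinfun_apply[OF hf_bl, of v] unfolding hd_def hf_def by simp
  have fstle: "norm (fst z) \<le> norm z" for z :: "'a \<times> 'b" by (cases z) (simp add: norm_fst_le)
  have hd_norm: "norm (blinfun_apply (hd v) u) \<le> \<epsilon>^2 * norm u" if v: "v \<in> cball 0 p" for v u
  proof -
    have "norm (blinfun_apply (hd v) u) \<le> norm (blinfun_apply (H' (g v)) (u, blinfun_apply (G' v) u))"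
      unfolding hd_app by (rule fstle)
    also have "\<dots> \<le> norm (H' (g v)) * norm (u, blinfun_apply (G' v) u)" by (rule norm_blinfun)
    also have "\<dots> \<le> (\<epsilon>^2/2) * (3/2 * norm u)"
      using H'small[OF gball[OF v]] pairb[OF v, of u] by (intro mult_mono) auto
    also have "\<dots> \<le> \<epsilon>^2 * norm u" by (simp add: mult_right_mono)
    finally show ?thesis .
  qed
  have hd_normb: "norm (hd v) \<le> \<epsilon>^2" if v: "v \<in> cball 0 p" for v
    using hd_norm[OF v] by (intro norm_blinfun_bound) auto
  define h where "h v = fst (H (g v))" for v
  have hderiv: "(h has_derivative blinfun_apply (hd v)) (at v within cball 0 p)" if v: "v \<in> cball 0 p" for v
  proof -
    have sub: "g ` cball 0 p \<subseteq> cball 0 r" using gr by auto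
    have "(H has_derivative blinfun_apply (H' (g v))) (at (g v) within g ` cball 0 p)"
      using has_derivative_subset[OF Hd[OF gr[OF v]] sub] .
    from diff_chain_within[OF gd[OF v] this]
    have "((H \<circ> g) has_derivative (blinfun_apply (H' (g v)) \<circ> (\<lambda>u. (u, blinfun_apply (G' v) u)))) (at v within cball 0 p)" .
    from has_derivative_fst[OF this]
    have "((\<lambda>x. fst (H (g x))) has_derivative (\<lambda>x. fst (blinfun_apply (H' (g v)) (x, blinfun_apply (G' v) x)))) (at v within cball 0 p)"
      by (simp add: o_def)
    moreover have "blinfun_apply (hd v) = (\<lambda>x. fst (blinfun_apply (H' (g v)) (x, blinfun_apply (G' v) x)))"
      by (rule ext) (simp add: hd_app)
    ultimately show ?thesis unfolding h_def[abs_def] by simp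
  qed
  have hon: "onorm (blinfun_apply (hd v)) \<le> \<epsilon>^2" if "v \<in> cball 0 p" for v
    using hd_normb[OF that] by (metis norm_blinfun.rep_eq)
  have hlip: "norm (h v - h w) \<le> \<epsilon>^2 * norm (v - w)" if "v \<in> cball 0 p" "w \<in> cball 0 p" for v w
    by (rule differentiable_bound[OF convex_cball hderiv hon that])
  have hd_hol: "norm (hd v - hd w) \<le> 5/2 * \<epsilon> * norm (v - w) powr \<delta>"
    if v: "v \<in> cball 0 p" and w: "w \<in> cball 0 p" for v w
  proof (rule norm_blinfun_bound)
    show "0 \<le> 5/2 * \<epsilon> * norm (v - w) powr \<delta>" using eps by simp
    fix u
    define A where "A = H' (g v)"
    define B where "B = H' (g w)"
    define x where "x = (u, blinfun_apply (G' v) u)"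
    define y where "y = (u, blinfun_apply (G' w) u)"
    have nv: "norm (v - w) powr \<delta> \<ge> 0" by simp
    have e1: "blinfun_apply A x - blinfun_apply B y = blinfun_apply (A - B) x + blinfun_apply B (x - y)"
      by (simp add: blinfun.diff_left blinfun.diff_right)
    have xy: "x - y = (0, blinfun_apply (G' v - G' w) u)"
      by (simp add: x_def y_def blinfun.diff_left)
    have "norm (blinfun_apply (hd v - hd w) u) = norm (fst (blinfun_apply A x - blinfun_apply B y))"
      by (simp add: hd_app A_def B_def x_def y_def blinfun.diff_left)
    also have "\<dots> \<le> norm (blinfun_apply A x - blinfun_apply B y)" by (rule fstle)
    also have "\<dots> \<le> norm (blinfun_apply (A - B) x) + norm (blinfun_apply B (x - y))"
      unfolding e1 by (rule norm_triangle_ineq)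
    also have "\<dots> \<le> norm (A - B) * norm x + norm B * norm (x - y)"
      by (intro add_mono norm_blinfun)
    also have "\<dots> \<le> (\<epsilon> * (3/2) * norm (v - w) powr \<delta>) * (3/2 * norm u)
                 + (\<epsilon>^2/2) * (1/2 * norm (v - w) powr \<delta> * norm u)"
    proof (intro add_mono mult_mono)
      have "norm (A - B) \<le> \<epsilon> * norm (g v - g w) powr \<delta>"
        unfolding A_def B_def by (rule H'h[OF gr[OF v] gr[OF w]])
      also have "\<dots> \<le> \<epsilon> * (3/2 * norm (v - w)) powr \<delta>"
        using glip[OF v w] eps \<delta> by (intro mult_left_mono powr_mono2) auto
      also have "(3/2 * norm (v - w)) powr \<delta> = (3/2) powr \<delta> * norm (v - w) powr \<delta>"
        by (rule powr_mult)
      also have "(3/2::real) powr \<delta> \<le> 3/2"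
        using powr_mono[of \<delta> 1 "3/2::real"] \<delta> by simp
      hence "(3/2) powr \<delta> * norm (v - w) powr \<delta> \<le> 3/2 * norm (v - w) powr \<delta>"
        using nv by (rule mult_right_mono)
      hence "\<epsilon> * ((3/2) powr \<delta> * norm (v - w) powr \<delta>) \<le> \<epsilon> * (3/2 * norm (v - w) powr \<delta>)"
        using eps by (intro mult_left_mono) auto
      hence "\<epsilon> * ((3/2) powr \<delta> * norm (v - w) powr \<delta>) \<le> \<epsilon> * (3/2) * norm (v - w) powr \<delta>"
        by (simp add: mult.assoc)
      finally show "norm (A - B) \<le> \<epsilon> * (3/2) * norm (v - w) powr \<delta>" by simp
      show "norm x \<le> 3/2 * norm u" unfolding x_def by (rule pairb[OF v])
      show "norm B \<le> \<epsilon>^2/2" unfolding B_def by (rule H'small[OF gball[OF w]])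
      have "norm (x - y) = norm (blinfun_apply (G' v - G' w) u)" by (simp add: xy)
      also have "\<dots> \<le> norm (G' v - G' w) * norm u" by (rule norm_blinfun)
      also have "\<dots> \<le> (1/2 * norm (v - w) powr \<delta>) * norm u"
        using G'h[OF v w] by (intro mult_right_mono) auto
      finally show "norm (x - y) \<le> 1/2 * norm (v - w) powr \<delta> * norm u" .
    qed (use eps nv in auto)
    also have "\<dots> = (9/4 + \<epsilon>/4) * \<epsilon> * norm (v - w) powr \<delta> * norm u"
      by (simp add: power2_eq_square field_simps)
    also have "\<dots> \<le> 5/2 * \<epsilon> * norm (v - w) powr \<delta> * norm u"
      using eps nv by (intro mult_right_mono) auto
    finally show "norm (blinfun_apply (hd v - hd w) u) \<le> 5/2 * \<epsilon> * norm (v - w) powr \<delta> * norm u" .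
  qed
  define \<Psi> where "\<Psi> = (\<lambda>v. blinfun_apply D1 v + fst (H (v, G v)))"
  have Psi_eq: "\<Psi> v = blinfun_apply D1 v + h v" for v by (simp add: \<Psi>_def h_def g_def)
  define m where "m = exp \<kappa> - \<epsilon>^2"
  have ka: "1 + \<epsilon> \<le> exp \<kappa>" using exp_ge_add_one_self[of \<kappa>] eps by linarith
  note na = num_aux[OF eps(1,2) ka]
  have m0: "m > 0" using na by (simp add: m_def)
  have m1: "1 \<le> m" using na ka eps unfolding m_def power2_eq_square by linarith
  have Psilow: "m * norm (v - w) \<le> norm (\<Psi> v - \<Psi> w)" if vw: "v \<in> cball 0 p" "w \<in> cball 0 p" for v w
  proof -
    have eq: "\<Psi> v - \<Psi> w = blinfun_apply D1 (v - w) + (h v - h w)" by (simp add: Psi_eq blinfun.diff_right)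
    have "norm (blinfun_apply D1 (v - w)) - norm (h v - h w) \<le> norm (blinfun_apply D1 (v - w) + (h v - h w))"
      by (rule norm_diff_ineq)
    moreover have "m * norm (v - w) = exp \<kappa> * norm (v - w) - \<epsilon>^2 * norm (v - w)"
      by (simp add: m_def left_diff_distrib)
    ultimately show ?thesis unfolding eq using D1low[of "v - w"] hlip[OF vw] by linarith
  qed
  have inj: "inj_on \<Psi> (cball 0 p)"
  proof (rule inj_onI)
    fix v w assume "v \<in> cball 0 p" "w \<in> cball 0 p" "\<Psi> v = \<Psi> w"
    then have "m * norm (v - w) \<le> 0" using Psilow by fastforce
    then show "v = w" using m0 by (simp add: mult_le_0_iff)
  qed
  define Pd where "Pd v = D1 + hd v" for v
  have Pd_app: "blinfun_apply (Pd v) u = blinfun_apply D1 u + blinfun_apply (hd v) u" for v u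
    by (simp add: Pd_def plus_blinfun.rep_eq)
  have Psid: "(\<Psi> has_derivative blinfun_apply (Pd v)) (at v within cball 0 p)" if v: "v \<in> cball 0 p" for v
  proof -
    have "((\<lambda>v. blinfun_apply D1 v + h v) has_derivative (\<lambda>u. blinfun_apply D1 u + blinfun_apply (hd v) u)) (at v within cball 0 p)"
      by (intro has_derivative_add bounded_linear.has_derivative[OF blinfun.bounded_linear_right] hderiv[OF v] has_derivative_ident)
    moreover have "\<Psi> = (\<lambda>v. blinfun_apply D1 v + h v)" by (rule ext) (simp add: Psi_eq)
    moreover have "blinfun_apply (Pd v) = (\<lambda>u. blinfun_apply D1 u + blinfun_apply (hd v) u)" by (rule ext) (simp add: Pd_app)
    ultimately show ?thesis by simp
  qed
  have Pdlow: "m * norm u \<le> norm (blinfun_apply (Pd v) u)" if v: "v \<in> cball 0 p" for v u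
  proof -
    have "norm (blinfun_apply D1 u) - norm (blinfun_apply (hd v) u) \<le> norm (blinfun_apply (Pd v) u)"
      unfolding Pd_app by (rule norm_diff_ineq)
    moreover have "m * norm u = exp \<kappa> * norm u - \<epsilon>^2 * norm u"
      by (simp add: m_def left_diff_distrib)
    ultimately show ?thesis using D1low[of u] hd_norm[OF v, of u] by linarith
  qed
  have Pd_inj: "inj (blinfun_apply (Pd v))" if v: "v \<in> cball 0 p" for v
  proof (rule injI)
    fix u1 u2 assume "blinfun_apply (Pd v) u1 = blinfun_apply (Pd v) u2"
    then have "blinfun_apply (Pd v) (u1 - u2) = 0" by (simp add: blinfun.diff_right)
    then have "m * norm (u1 - u2) \<le> 0" using Pdlow[OF v, of "u1 - u2"] by simp
    then show "u1 = u2" using m0 by (simp add: mult_le_0_iff)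
  qed
  have Pd_surj: "surj (blinfun_apply (Pd v))" if v: "v \<in> cball 0 p" for v
    using linear_injective_imp_surjective[OF bounded_linear.linear[OF blinfun.bounded_linear_right] Pd_inj[OF v]] by simp
  define Bd where "Bd v = Blinfun (inv (blinfun_apply (Pd v)))" for v
  have Bd_bl: "bounded_linear (inv (blinfun_apply (Pd v)))" if v: "v \<in> cball 0 p" for v
    by (rule inj_linear_imp_inv_bounded_linear[OF blinfun.bounded_linear_right Pd_inj[OF v]])
  have Bd_app: "blinfun_apply (Bd v) = inv (blinfun_apply (Pd v))" if v: "v \<in> cball 0 p" for v
    unfolding Bd_def using bounded_linear_Blinfun_apply[OF Bd_bl[OF v]] .
  have PdBd: "blinfun_apply (Pd v) (blinfun_apply (Bd v) z) = z" if v: "v \<in> cball 0 p" for v z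
    using Pd_surj[OF v] by (simp add: Bd_app[OF v] surj_f_inv_f)
  have BdPd: "blinfun_apply (Bd v) (blinfun_apply (Pd v) u) = u" if v: "v \<in> cball 0 p" for v u
    using Pd_inj[OF v] by (simp add: Bd_app[OF v] inv_f_f)
  have Bd_norm: "norm (blinfun_apply (Bd v) z) \<le> 1/m * norm z" if v: "v \<in> cball 0 p" for v z
    using Pdlow[OF v, of "blinfun_apply (Bd v) z"] PdBd[OF v] m0 by (simp add: field_simps)
  have Bd_normb: "norm (Bd v) \<le> 1/m" if v: "v \<in> cball 0 p" for v
    using Bd_norm[OF v] m0 by (intro norm_blinfun_bound) auto
  have h0: "norm (h 0) < 2 * \<epsilon> * \<eta>"
  proof -
    have sub: "cball 0 \<eta> \<subseteq> cball (0::'a\<times>'b) r" using r by auto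
    have Hde: "(H has_derivative blinfun_apply (H' x)) (at x within cball 0 \<eta>)" if "x \<in> cball 0 \<eta>" for x
      using has_derivative_subset[OF Hd sub] that sub by blast
    have on: "onorm (blinfun_apply (H' x)) \<le> \<epsilon> * \<eta> powr \<delta>" if "x \<in> cball 0 \<eta>" for x
      using H'eta[OF that] by (metis norm_blinfun.rep_eq)
    have z: "(0::'a\<times>'b) \<in> cball 0 \<eta>" using r by simp
    have gz: "((0::'a), G 0) \<in> cball 0 \<eta>" using G0' r by simp
    have "norm (H (0, G 0) - H 0) \<le> \<epsilon> * \<eta> powr \<delta> * norm ((0::'a, G 0) - 0)"
      by (rule differentiable_bound[OF convex_cball Hde on gz z])
    also have "\<dots> = \<epsilon> * (\<eta> powr \<delta> * norm (G 0))" by simp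
    also have "\<dots> \<le> \<epsilon> * (1 * \<eta>)"
      using etad eps G0' r by (intro mult_left_mono mult_mono) auto
    finally have 1: "norm (H (0, G 0) - H 0) \<le> \<epsilon> * \<eta>" by simp
    have "norm (h 0) \<le> norm (H (0, G 0))" unfolding h_def g_def by (rule fstle)
    also have "\<dots> \<le> norm (H 0) + norm (H (0, G 0) - H 0)" by (rule norm_triangle_sub)
    finally show ?thesis using 1 H0 by linarith
  qed
  have incl: "cball 0 (exp (\<kappa> - sqrt \<epsilon>) * p) \<subseteq> \<Psi> ` cball 0 p"
  proof
    fix y :: 'a assume y: "y \<in> cball 0 (exp (\<kappa> - sqrt \<epsilon>) * p)"
    define T where "T v = Di (y - h v)" for v
    have p0: "0 \<in> cball (0::'a) p" using r by simp
    have hb: "norm (h v) \<le> 3 * \<epsilon> * p" if v: "v \<in> cball 0 p" for v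
    proof -
      have "norm (h v - h 0) \<le> \<epsilon>^2 * norm v" using hlip[OF v p0] by simp
      also have "\<dots> \<le> \<epsilon> * p" using v na(1) eps unfolding power2_eq_square
        by (intro mult_mono) auto
      finally have "norm (h v) \<le> norm (h 0) + \<epsilon> * p" using norm_triangle_ineq2[of "h v" "h 0"] by linarith
      moreover have "2 * \<epsilon> * \<eta> \<le> 2 * \<epsilon> * p" using r eps by simp
      ultimately show ?thesis using h0 by linarith
    qed
    have s: "sqrt \<epsilon> \<le> 1/10" using eps by (intro real_le_lsqrt) (auto simp: power2_eq_square)
    have sq: "sqrt \<epsilon> * sqrt \<epsilon> = \<epsilon>" using eps by simp
    have es: "exp (- sqrt \<epsilon>) + 3 * \<epsilon> \<le> 1"
    proof -
      define s' where "s' = sqrt \<epsilon>"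
      have s0: "0 \<le> s'" using eps by (simp add: s'_def)
      have "1 + s' \<le> exp s'" by simp
      then have "exp (- s') * (1 + s') \<le> 1" by (simp add: exp_minus divide_le_eq field_simps)
      moreover have "3 * (s' * s') * (1 + s') \<le> s'"
      proof -
        have s1: "s' \<le> 1/10" using s unfolding s'_def .
        have "s' * (1 + s') \<le> (1/10) * (1 + 1/10)" using s1 s0 by (intro mult_mono) auto
        then have "s' * (1 + s') \<le> 11/100" by simp
        then have "3 * (s' * (1 + s')) \<le> 1" by simp
        then have "3 * s' * (1 + s') \<le> 1" by (metis mult.assoc)
        then show ?thesis using s0 mult_left_mono[of "3 * s' * (1 + s')" 1 s'] by (simp add: algebra_simps)
      qed
      ultimately have "(exp (- s') + 3 * (s' * s')) * (1 + s') \<le> 1 + s'" by (simp add: algebra_simps)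
      then have "exp (- s') + 3 * (s' * s') \<le> 1" using s0 by (simp add: mult_le_cancel_right2)
      then show ?thesis using sq unfolding s'_def by simp
    qed
    have Tmap: "T ` cball 0 p \<subseteq> cball 0 p"
    proof
      fix z assume "z \<in> T ` cball 0 p"
      then obtain v where v: "v \<in> cball 0 p" "z = T v" by auto
      have "norm (T v) \<le> exp (-\<kappa>) * norm (y - h v)" unfolding T_def by (rule Dibound)
      also have "\<dots> \<le> exp (-\<kappa>) * (exp (\<kappa> - sqrt \<epsilon>) * p + 3 * \<epsilon> * p)"
        using y hb[OF v(1)] norm_triangle_ineq4[of y "h v"] by (intro mult_left_mono) auto
      also have "\<dots> = exp (- sqrt \<epsilon>) * p + exp (-\<kappa>) * (3 * \<epsilon> * p)"
        by (simp add: algebra_simps flip: exp_add)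
      also have "\<dots> \<le> exp (- sqrt \<epsilon>) * p + 1 * (3 * \<epsilon> * p)"
        using eps r \<kappa> by (intro add_left_mono mult_right_mono) auto
      also have "\<dots> = (exp (- sqrt \<epsilon>) + 3 * \<epsilon>) * p" by (simp add: algebra_simps)
      also have "\<dots> \<le> 1 * p" using es r by (intro mult_right_mono) auto
      finally show "z \<in> cball 0 p" using v by simp
    qed
    have contr: "dist (T v) (T w) \<le> \<epsilon>^2 * dist v w" if "v \<in> cball 0 p" "w \<in> cball 0 p" for v w
    proof -
      have "T v - T w = Di (h w - h v)" unfolding T_def
        by (simp add: linear_diff[OF bounded_linear.linear[OF Di_bl], symmetric])
      then have "dist (T v) (T w) \<le> exp (-\<kappa>) * norm (h w - h v)" using Dibound by (simp add: dist_norm)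
      also have "\<dots> \<le> 1 * (\<epsilon>^2 * norm (w - v))"
        using hlip[OF that(2,1)] \<kappa> by (intro mult_mono) auto
      finally show ?thesis by (simp add: dist_norm norm_minus_commute)
    qed
    have e21: "\<epsilon>^2 < 1" using na(1) eps unfolding power2_eq_square by linarith
    have cc: "complete (cball (0::'a) p)" by (simp add: complete_eq_closed)
    obtain v where v: "v \<in> cball 0 p" "T v = v"
      using Banach_fix[OF cc _ _ e21 Tmap contr] p0 by auto
    have "\<Psi> v = y" using v(2) unfolding Psi_eq T_def
      by (metis D1Di diff_add_cancel)
    then show "y \<in> \<Psi> ` cball 0 p" using v by blast
  qed
  define \<Phi> where "\<Phi> = the_inv_into (cball 0 p) \<Psi>"
  define S where "S = \<Psi> ` cball 0 p"
  have PhiPsi: "\<Phi> (\<Psi> v) = v" if "v \<in> cball 0 p" for v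
    using the_inv_into_f_f[OF inj that] unfolding \<Phi>_def .
  have PhiS: "\<Phi> y \<in> cball 0 p" if "y \<in> S" for y using that PhiPsi unfolding S_def by auto
  have PsiPhi: "\<Psi> (\<Phi> y) = y" if "y \<in> S" for y
    using f_the_inv_into_f[OF inj] that unfolding \<Phi>_def S_def by blast
  have lipPsi: "norm (a - b) \<le> 1/m * norm (\<Psi> a - \<Psi> b)" if "a \<in> cball 0 p" "b \<in> cball 0 p" for a b
    using Psilow[OF that] m0 by (simp add: field_simps)
  have Philip: "norm (\<Phi> y1 - \<Phi> y2) \<le> 1/m * norm (y1 - y2)" if "y1 \<in> S" "y2 \<in> S" for y1 y2
    using lipPsi[OF PhiS[OF that(1)] PhiS[OF that(2)]] PsiPhi that by simp
  define \<Phi>' where "\<Phi>' y = Bd (\<Phi> y)" for y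
  have deriv: "\<forall>y\<in>S. (\<Phi> has_derivative blinfun_apply (\<Phi>' y)) (at y within S)"
  proof
    fix y assume "y \<in> S"
    then obtain v where v: "v \<in> cball 0 p" "y = \<Psi> v" by (auto simp: S_def)
    have "(\<Phi> has_derivative blinfun_apply (Bd v)) (at (\<Psi> v) within \<Psi> ` cball 0 p)"
      by (rule inv_deriv_within[OF Psid[OF v(1)] v(1) blinfun.bounded_linear_right BdPd[OF v(1)] PhiPsi _ lipPsi])
        (use m0 in auto)
    then show "(\<Phi> has_derivative blinfun_apply (\<Phi>' y)) (at y within S)"
      using v PhiPsi[OF v(1)] by (simp add: \<Phi>'_def S_def)
  qed
  have c0: "c0_norm S \<Phi>' \<le> ennreal (1/m)"
    unfolding \<Phi>'_def by (rule c0_norm_le_I) (rule Bd_normb[OF PhiS])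
  have N1: "1/m < exp (-\<kappa> + \<epsilon>)"
  proof -
    have "1/m < (1 / exp \<kappa>) * (1 + \<epsilon>)" unfolding m_def by (rule num1[OF eps(1,2) ka])
    also have "\<dots> \<le> (1 / exp \<kappa>) * exp \<epsilon>" by (intro mult_left_mono) auto
    also have "\<dots> = exp (-\<kappa> + \<epsilon>)" by (simp only: exp_add exp_minus) (simp add: divide_inverse)
    finally show ?thesis .
  qed
  have N2: "1/m + (1/m)^2 * (5/2*\<epsilon>) < exp (-\<kappa> + 3 * \<epsilon>)"
  proof -
    have "(1/m)^2 \<le> 1/m" using m1 m0 by (simp add: power2_eq_square divide_le_eq)
    then have "(1/m)^2 * (5/2*\<epsilon>) \<le> 1/m * (5/2*\<epsilon>)" using eps by (intro mult_right_mono) auto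
    then have "1/m + (1/m)^2 * (5/2*\<epsilon>) \<le> 1/m * (1 + 5/2*\<epsilon>)" by (simp add: algebra_simps)
    also have "\<dots> < (1 / exp \<kappa>) * (1 + 3*\<epsilon>)" unfolding m_def by (rule num2[OF eps(1,2) ka])
    also have "\<dots> \<le> (1 / exp \<kappa>) * exp (3*\<epsilon>)"
      using exp_ge_add_one_self[of "3*\<epsilon>"] by (intro mult_left_mono) auto
    also have "\<dots> = exp (-\<kappa> + 3*\<epsilon>)" by (simp only: exp_add exp_minus) (simp add: divide_inverse)
    finally show ?thesis .
  qed
  have holb: "hol \<delta> S \<Phi>' \<le> ennreal ((1/m)^2 * (5/2*\<epsilon>))"
  proof (rule hol_le_I)
    fix y1 y2 assume y: "y1 \<in> S" "y2 \<in> S" "y1 \<noteq> y2"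
    define v1 where "v1 = \<Phi> y1"
    define v2 where "v2 = \<Phi> y2"
    have v: "v1 \<in> cball 0 p" "v2 \<in> cball 0 p" using PhiS y by (auto simp: v1_def v2_def)
    have "norm (Bd v1 - Bd v2) \<le> 1/m * norm (hd v2 - hd v1) * (1/m)"
    proof (rule norm_blinfun_bound)
      show "0 \<le> 1/m * norm (hd v2 - hd v1) * (1/m)" using m0 by simp
      fix z
      define w where "w = blinfun_apply (Bd v2) z"
      have z: "z = blinfun_apply (Pd v2) w" using PdBd[OF v(2)] by (simp add: w_def)
      have "blinfun_apply (Bd v1 - Bd v2) z = blinfun_apply (Bd v1) z - blinfun_apply (Bd v1) (blinfun_apply (Pd v1) w)"
        using BdPd[OF v(1)] by (simp add: blinfun.diff_left w_def)
      also have "\<dots> = blinfun_apply (Bd v1) (z - blinfun_apply (Pd v1) w)" by (simp add: blinfun.diff_right)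
      also have "z - blinfun_apply (Pd v1) w = blinfun_apply (hd v2 - hd v1) w"
        unfolding z by (simp add: Pd_app blinfun.diff_left)
      finally have "norm (blinfun_apply (Bd v1 - Bd v2) z) = norm (blinfun_apply (Bd v1) (blinfun_apply (hd v2 - hd v1) w))" by simp
      also have "\<dots> \<le> 1/m * norm (blinfun_apply (hd v2 - hd v1) w)" by (rule Bd_norm[OF v(1)])
      also have "\<dots> \<le> 1/m * (norm (hd v2 - hd v1) * norm w)" using m0 by (intro mult_left_mono norm_blinfun) auto
      also have "\<dots> \<le> 1/m * (norm (hd v2 - hd v1) * (1/m * norm z))"
        using m0 Bd_norm[OF v(2), of z] by (intro mult_left_mono) (auto simp: w_def)
      finally show "norm (blinfun_apply (Bd v1 - Bd v2) z) \<le> 1/m * norm (hd v2 - hd v1) * (1/m) * norm z"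
        by (simp add: mult_ac)
    qed
    also have "\<dots> \<le> 1/m * (5/2 * \<epsilon> * norm (v2 - v1) powr \<delta>) * (1/m)"
      using hd_hol[OF v(2) v(1)] m0 by (intro mult_right_mono mult_left_mono) auto
    also have "norm (v2 - v1) powr \<delta> \<le> norm (y1 - y2) powr \<delta>"
    proof -
      have "norm (v2 - v1) \<le> 1/m * norm (y1 - y2)"
        using Philip[OF y(1,2)] by (simp add: v1_def v2_def norm_minus_commute)
      also have "\<dots> \<le> norm (y1 - y2)" using m1 m0 by (simp add: divide_le_eq mult_le_cancel_left1)
      finally show ?thesis using \<delta> by (intro powr_mono2) auto
    qed
    then have "1/m * (5/2 * \<epsilon> * norm (v2 - v1) powr \<delta>) * (1/m) \<le> 1/m * (5/2 * \<epsilon> * norm (y1 - y2) powr \<delta>) * (1/m)"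
      using m0 eps by (intro mult_right_mono mult_left_mono) auto
    finally show "norm (\<Phi>' y1 - \<Phi>' y2) \<le> (1/m)^2 * (5/2*\<epsilon>) * norm (y1 - y2) powr \<delta>"
      by (simp add: \<Phi>'_def v1_def v2_def power2_eq_square mult_ac)
  qed
  have cd: "cdelta_norm \<delta> S \<Phi>' < ennreal (exp (-\<kappa> + 3 * \<epsilon>))"
  proof -
    have "cdelta_norm \<delta> S \<Phi>' \<le> ennreal (1/m) + ennreal ((1/m)^2 * (5/2*\<epsilon>))"
      unfolding cdelta_norm_def by (intro add_mono c0 holb)
    also have "\<dots> = ennreal (1/m + (1/m)^2 * (5/2*\<epsilon>))" using m0 eps by (simp add: ennreal_plus)
    also have "\<dots> < ennreal (exp (-\<kappa> + 3 * \<epsilon>))" using N2 by (simp add: ennreal_lessI)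
    finally show ?thesis .
  qed
  have c0s: "c0_norm S \<Phi>' < ennreal (exp (-\<kappa> + \<epsilon>))"
    using c0 N1 by (meson ennreal_lessI exp_gt_zero le_less_trans)
  have Phi0: "norm (\<Phi> 0) < 2 * \<epsilon> * \<eta> * exp (-\<kappa> + \<epsilon>)"
  proof -
    have z: "(0::'a) \<in> cball 0 p" using r by simp
    have "(0::'a) \<in> S" using incl r unfolding S_def by auto
    have Psi0: "\<Psi> 0 = h 0" by (simp add: Psi_eq)
    have "norm (\<Phi> 0) = norm (\<Phi> 0 - \<Phi> (\<Psi> 0))" using PhiPsi[OF z] by simp
    also have "\<dots> \<le> 1/m * norm (0 - \<Psi> 0)" by (rule Philip[OF \<open>0 \<in> S\<close>]) (use z in \<open>auto simp: S_def\<close>)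
    also have "\<dots> = 1/m * norm (h 0)" by (simp add: Psi0)
    also have "\<dots> < 1/m * (2 * \<epsilon> * \<eta>)" using h0 m0 by (intro mult_strict_left_mono) auto
    also have "\<dots> \<le> exp (-\<kappa> + \<epsilon>) * (2 * \<epsilon> * \<eta>)" using N1 eps r by (intro mult_right_mono) auto
    finally show ?thesis by (simp add: mult_ac)
  qed
  have PsiL: "(\<lambda>v. blinfun_apply D1 v + fst (H (v, G v))) = \<Psi>" by (simp add: \<Psi>_def)
  show ?thesis unfolding Let_def PsiL \<Phi>_def[symmetric] S_def[symmetric]
    using inj incl deriv c0s Phi0 cd unfolding S_def by blast
qed
theorem lemmaA1:
  fixes \<delta> \<kappa> :: real
  assumes "0 < \<delta>" "\<delta> < 1" "0 < \<kappa>"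
  shows "\<exists>\<epsilon>0>0. \<forall>\<epsilon>. 0 < \<epsilon> \<and> \<epsilon> < \<epsilon>0 \<longrightarrow>
    (\<forall>(r::real) (\<eta>::real) (p::real)
       (D1 :: 'a::euclidean_space \<Rightarrow>\<^sub>L 'a) (D2 :: 'b::euclidean_space \<Rightarrow>\<^sub>L 'b)
       (H :: 'a \<times> 'b \<Rightarrow> 'a \<times> 'b) (H' :: 'a \<times> 'b \<Rightarrow> ('a \<times> 'b) \<Rightarrow>\<^sub>L ('a \<times> 'b))
       (G :: 'a \<Rightarrow> 'b) (G' :: 'a \<Rightarrow> 'a \<Rightarrow>\<^sub>L 'b).
      0 < r \<and> 2 * r powr \<delta> < \<epsilon> \<and> 0 < \<eta> \<and> \<eta> \<le> p \<and> p \<le> r / 2 \<and>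
      \<comment> \<open>(GT2)\<close>
      bij (blinfun_apply D1) \<and> onorm (inv (blinfun_apply D1)) < exp (-\<kappa>) \<and>
      bij (blinfun_apply D2) \<and> norm D2 < exp (-\<kappa>) \<and>
      \<comment> \<open>(GT3)\<close>
      C1_holder \<delta> (cball 0 r) H H' \<and>
      norm (H 0) < \<epsilon> * \<eta> \<and>
      (\<forall>t\<in>{\<eta>..2*p}. c0_norm (cball 0 t) H' < ennreal (\<epsilon> * t powr \<delta>)) \<and>
      hol \<delta> (cball 0 r) H' < ennreal \<epsilon> \<and>
      \<comment> \<open>admissible graph\<close>
      admissible_u \<delta> p \<eta> G G'
      \<longrightarrow>
      (let \<Psi> = (\<lambda>v. blinfun_apply D1 v + fst (H (v, G v)));
           \<Phi> = the_inv_into (cball 0 p) \<Psi>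
       in inj_on \<Psi> (cball 0 p) \<and>
          cball 0 (exp (\<kappa> - sqrt \<epsilon>) * p) \<subseteq> \<Psi> ` cball 0 p \<and>
          (\<exists>\<Phi>'. (\<forall>y\<in>\<Psi> ` cball 0 p.
                    (\<Phi> has_derivative blinfun_apply (\<Phi>' y)) (at y within \<Psi> ` cball 0 p)) \<and>
                 c0_norm (\<Psi> ` cball 0 p) \<Phi>' < ennreal (exp (-\<kappa> + \<epsilon>)) \<and>
                 norm (\<Phi> 0) < 2 * \<epsilon> * \<eta> * exp (-\<kappa> + \<epsilon>) \<and>
                 cdelta_norm \<delta> (\<Psi> ` cball 0 p) \<Phi>' < ennreal (exp (-\<kappa> + 3 * \<epsilon>)))))"
    apply (intro exI[of _ "min (1/100) \<kappa>"] conjI allI impI)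
   apply (simp add: assms)
  apply (elim conjE)
  apply (rule core)
  using assms apply auto
  done

end
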